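(* Fix $\lambda\ge0$ and an integer $\Delta_{\max}\ge1$. Consider the average-cost Markov decision process with state space $S=\{0,1,\dots,\Delta_{\max}\}$, action set $\{0,1\}$, transition probabilities $\mathbb{P}(\Delta'\mid\Delta,a)$ given in the context, and transition cost $C_\lambda(\Delta,a,\Delta')=\Delta'+\lambda a$, i.e., the problem of finding a policy $\pi$ minimizing $\lim_{T\to\infty}\frac1T\mathbb{E}\big[\sum_{t=0}^{T-1}\{\Delta(t)+\lambda a(t)\}\mid s(0)\big]$. Then an optimal policy of this MDP is a threshold policy: there is $\Delta_T$ such that the optimal action is $a=1$ for all states $\Delta\ge\Delta_T$ and $a=0$ for $\Delta<\Delta_T$.
   Context: Let $0<p_s<1$, $0<p_g<1$, $\bar p_s=1-p_s$, $\bar p_g=1-p_g$. The state $\Delta$ is a (truncated) Version Age of Information. The transition probabilities are: for $a=0$: $\mathbb{P}(\Delta+1\mid\Delta,0)=p_g$ and $\mathbb{P}(\Delta\mid\Delta,0)=\bar p_g$ if $\Delta<\Delta_{\max}$, and $\mathbb{P}(\Delta_{\max}\mid\Delta_{\max},0)=1$; for $a=1$: $\mathbb{P}(\Delta+1\mid\Delta,1)=\bar p_s p_g$ and $\mathbb{P}(\Delta\mid\Delta,1)=\bar p_s\bar p_g$ if $\Delta<\Delta_{\max}$, $\mathbb{P}(\Delta_{\max}\mid\Delta_{\max},1)=\bar p_s$, and in all states $\mathbb{P}(1\mid\Delta,1)=p_sp_g$, $\mathbb{P}(0\mid\Delta,1)=p_s\bar p_g$ (probabilities of coinciding target states add). 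*)

theory Defs
  imports Complex_Main "HOL-Library.Extended_Real" "HOL-Library.Liminf_Limsup"
begin

text \<open>Transition probability P(s' | s, a) of the truncated Version-AoI MDP with
  parameters ps, pg, Dmax. States are 0..Dmax, actions are 0 and 1.
  Probabilities of coinciding target states add up.\<close>
definition vaoi_trans :: "real \<Rightarrow> real \<Rightarrow> nat \<Rightarrow> nat \<Rightarrow> nat \<Rightarrow> nat \<Rightarrow> real" where
  "vaoi_trans ps pg Dmax s a s' =
     (if a = 0 then
        (if s < Dmax then pg * (if s' = s + 1 then 1 else 0) + (1 - pg) * (if s' = s then 1 else 0)
         else (if s' = Dmax then 1 else 0))
      else
        (if s < Dmax then (1 - ps) * pg * (if s' = s + 1 then 1 else 0)
                         + (1 - ps) * (1 - pg) * (if s' = s then 1 else 0)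
         else (1 - ps) * (if s' = Dmax then 1 else 0))
        + ps * pg * (if s' = 1 then 1 else 0) + ps * (1 - pg) * (if s' = 0 then 1 else 0))"

text \<open>A (general, history-dependent, randomized) policy maps the history of past
  (state, action) pairs and the current state to the probability of taking action 1.\<close>
type_synonym policy = "(nat \<times> nat) list \<Rightarrow> nat \<Rightarrow> real"

definition valid_policy :: "policy \<Rightarrow> bool" where
  "valid_policy \<pi> \<longleftrightarrow> (\<forall>h s. 0 \<le> \<pi> h s \<and> \<pi> h s \<le> 1)"

definition act_prob :: "policy \<Rightarrow> (nat \<times> nat) list \<Rightarrow> nat \<Rightarrow> nat \<Rightarrow> real" where
  "act_prob \<pi> h s a = (if a = 1 then \<pi> h s else 1 - \<pi> h s)"

fun exp_cost :: "real \<Rightarrow> real \<Rightarrow> nat \<Rightarrow> real \<Rightarrow> policy \<Rightarrow> (nat \<times> nat) list \<Rightarrow> nat \<Rightarrow> nat \<Rightarrow> real" where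
  "exp_cost ps pg Dmax lam \<pi> h s 0 = 0"
| "exp_cost ps pg Dmax lam \<pi> h s (Suc T) =
     (\<Sum>a\<in>{0,1::nat}. act_prob \<pi> h s a *
        (real s + lam * real a +
         (\<Sum>s'\<in>{0..Dmax}. vaoi_trans ps pg Dmax s a s' *
              exp_cost ps pg Dmax lam \<pi> (h @ [(s, a)]) s' T)))"

definition avg_cost :: "real \<Rightarrow> real \<Rightarrow> nat \<Rightarrow> real \<Rightarrow> policy \<Rightarrow> nat \<Rightarrow> ereal" where
  "avg_cost ps pg Dmax lam \<pi> s =
     limsup (\<lambda>T. ereal (exp_cost ps pg Dmax lam \<pi> [] s T / real T))"

definition threshold_policy :: "nat \<Rightarrow> policy" where
  "threshold_policy DT = (\<lambda>h s. if DT \<le> s then 1 else 0)"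

end

theory Submission
  imports Defs
begin

lemma dsum: "k \<le> (N::nat) \<Longrightarrow> (\<Sum>s'\<in>{0..N}. c * (if s' = k then 1 else 0) * (f s' :: real)) = c * f k"
proof -
  assume "k \<le> N"
  have "(\<Sum>s'\<in>{0..N}. c * (if s' = k then 1 else 0) * (f s' :: real)) = (\<Sum>s'\<in>{0..N}. if s' = k then c * f s' else 0)"
    by (rule sum.cong) auto
  then show ?thesis using \<open>k \<le> N\<close> by (simp only: sum.delta finite_atLeastAtMost) simp
qed

lemma trans_sum:
  fixes f :: "nat \<Rightarrow> real"
  assumes "s \<le> N" "1 \<le> N"
  shows "(\<Sum>s'\<in>{0..N}. vaoi_trans ps pg N s a s' * f s') =
    (if a = 0 then (if s < N then pg * f (s+1) + (1-pg) * f s else f N)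
     else (1 - ps) * (if s < N then pg * f (s+1) + (1-pg) * f s else f N) + ps * (pg * f 1 + (1 - pg) * f 0))"
proof -
  let ?d = "\<lambda>k s'. (if s' = k then 1 else 0) :: real"
  have S: "\<And>x y z. (\<Sum>s'\<in>{0..N}. (x s' + y s') * f s') = (\<Sum>s'\<in>{0..N}. x s' * f s') + (\<Sum>s'\<in>{0..N}. y s' * f s')"
    by (simp add: distrib_right sum.distrib)
  show ?thesis
  proof (cases "a = 0")
    case True
    show ?thesis
    proof (cases "s < N")
      case True
      have "(\<Sum>s'\<in>{0..N}. vaoi_trans ps pg N s a s' * f s') = (\<Sum>s'\<in>{0..N}. (pg * ?d (s+1) s' + (1 - pg) * ?d s s') * f s')"
        using True \<open>a = 0\<close> by (simp add: vaoi_trans_def)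
      also have "\<dots> = pg * f (s+1) + (1-pg) * f s"
        unfolding S using True by (simp add: dsum)
      finally show ?thesis using True \<open>a = 0\<close> by simp
    next
      case False
      have "(\<Sum>s'\<in>{0..N}. vaoi_trans ps pg N s a s' * f s') = (\<Sum>s'\<in>{0..N}. 1 * ?d N s' * f s')"
        using False \<open>a = 0\<close> by (simp add: vaoi_trans_def)
      also have "\<dots> = f N" using dsum[of N N 1 f] by simp
      finally show ?thesis using False \<open>a = 0\<close> by simp
    qed
  next
    case a: False
    show ?thesis
    proof (cases "s < N")
      case True
      have "(\<Sum>s'\<in>{0..N}. vaoi_trans ps pg N s a s' * f s') = (\<Sum>s'\<in>{0..N}.
          ((1 - ps) * pg * ?d (s+1) s' + (1 - ps) * (1 - pg) * ?d s s' + ps * pg * ?d 1 s' + ps * (1 - pg) * ?d 0 s') * f s')"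
        using True a by (simp add: vaoi_trans_def)
      also have "\<dots> = (1 - ps) * pg * f (s+1) + (1 - ps) * (1-pg) * f s + ps * pg * f 1 + ps * (1 - pg) * f 0"
        unfolding S using True assms by (simp add: dsum)
      finally show ?thesis using True a by (simp add: algebra_simps)
    next
      case False
      have "(\<Sum>s'\<in>{0..N}. vaoi_trans ps pg N s a s' * f s') = (\<Sum>s'\<in>{0..N}.
          ((1 - ps) * ?d N s' + ps * pg * ?d 1 s' + ps * (1 - pg) * ?d 0 s') * f s')"
        using False a by (simp add: vaoi_trans_def)
      also have "\<dots> = (1 - ps) * f N + ps * pg * f 1 + ps * (1 - pg) * f 0"
        unfolding S using assms by (simp add: dsum)
      finally show ?thesis using False a by (simp add: algebra_simps)
    qed
  qed
qed

lemma fp: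
  fixes pg ps t a L x :: real
  assumes "0 < pg" "pg < 1" "0 < ps" "ps < 1"
    and x: "x = min ((t + pg*a)/pg) ((t + L + (1-ps)*pg*a)/(1-(1-ps)*(1-pg)))"
  shows "x = t + min (pg*a + (1-pg)*x) (L + (1-ps)*(pg*a + (1-pg)*x))"
proof -
  define A where "A = (t + pg*a)/pg"
  define d where "d = 1-(1-ps)*(1-pg)"
  define B where "B = (t + L + (1-ps)*pg*a)/d"
  have dp: "0 < d"
  proof -
    have "(1 - ps) * (1 - pg) < 1 * 1"
      using assms by (intro mult_strict_mono) auto
    then show ?thesis by (simp add: d_def)
  qed
  have eA: "A = t + pg*a + (1-pg)*A" using assms(1) by (simp add: A_def field_simps)
  have eB: "B = t + L + (1-ps)*(pg*a + (1-pg)*B)" using dp by (simp add: B_def d_def field_simps)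
  have q: "0 \<le> (1-ps)*(1-pg)" "(1-ps)*(1-pg) \<le> 1" using dp assms by (auto simp: d_def)
  have x': "x = min A B" using x by (simp add: A_def B_def d_def)
  show ?thesis
  proof (cases "A \<le> B")
    case True
    have "(1-ps)*(1-pg)*(B - A) \<le> B - A" using q True by (simp add: mult_left_le_one_le)
    then have "A \<le> t + L + (1-ps)*(pg*a + (1-pg)*A)" using eB by (simp add: algebra_simps)
    then show ?thesis using x' True eA by (simp add: min_def)
  next
    case False
    have "(1-pg)*(A - B) \<le> A - B" using False assms by (simp add: mult_left_le_one_le)
    then have "B \<le> t + pg*a + (1-pg)*B" using eA by (simp add: algebra_simps)
    then show ?thesis using x' False eB by (simp add: min_def)
  qed
qed

context
  fixes ps pg lam :: real and N :: nat
  assumes ps0: "0 < ps" and ps1: "ps < 1" and pg0: "0 < pg" and pg1: "pg < 1"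
    and lam0: "0 \<le> lam" and N1: "1 \<le> N"
begin

definition gg :: "real \<Rightarrow> real" where
  "gg c = real N + min 0 (lam + ps * c)"

fun w :: "real \<Rightarrow> nat \<Rightarrow> real" where
  "w c 0 = 0"
| "w c (Suc k) = min ((real N - real (Suc k) - gg c + pg * w c k) / pg)
      ((real N - real (Suc k) - gg c + lam + ps * c + (1 - ps) * pg * w c k) / (1 - (1 - ps) * (1 - pg)))"

definition hv :: "real \<Rightarrow> nat \<Rightarrow> real" where
  "hv c s = w c (N - s)"

lemma dpos: "0 < 1 - (1 - ps) * (1 - pg)"
proof -
  have "(1 - ps) * (1 - pg) < 1 * 1"
    using ps0 ps1 pg0 pg1 by (intro mult_strict_mono) auto
  then show ?thesis by simp
qed

lemma w_cont: "continuous_on UNIV (\<lambda>c. w c k)"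
proof -
  have "(1 - ps) * (1 - pg) \<noteq> 1" using dpos by linarith
  then show ?thesis
    by (induction k) (auto simp: gg_def intro!: continuous_intros simp: pg0[THEN less_imp_neq, symmetric])
qed

lemma hv_Suc: "s < N \<Longrightarrow> hv c s = min ((real s - gg c + pg * hv c (s+1)) / pg)
      ((real s - gg c + lam + ps * c + (1 - ps) * pg * hv c (s+1)) / (1 - (1 - ps) * (1 - pg)))"
proof -
  assume "s < N"
  then have e: "N - s = Suc (N - (s+1))" and r: "real N - real (Suc (N - (s+1))) = real s" by auto
  show ?thesis unfolding hv_def e w.simps r ..
qed

lemma hv_N: "hv c N = 0"
  by (simp add: hv_def)

lemma w_hi: "0 \<le> lam + ps * c \<Longrightarrow> w c k \<le> 0"
proof (induction k)
  case 0 then show ?case by simp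
next
  case (Suc k)
  have g: "gg c = real N" using Suc.prems by (simp add: gg_def)
  have "(real N - real (Suc k) - gg c + pg * w c k) / pg \<le> 0"
  proof (intro divide_nonpos_pos)
    have "pg * w c k \<le> 0" using Suc pg0 by (simp add: mult_nonneg_nonpos)
    then show "real N - real (Suc k) - gg c + pg * w c k \<le> 0" by (simp add: g)
  qed (use pg0 in auto)
  then show ?case by simp
qed

lemma d_ge: "pg \<le> 1 - (1 - ps) * (1 - pg)" and d_ge2: "(1 - ps) * pg \<le> 1 - (1 - ps) * (1 - pg)"
proof -
  have "1 - (1 - ps) * (1 - pg) = pg + ps * (1 - pg)" by (simp add: algebra_simps)
  moreover have "0 \<le> ps * (1 - pg)" using ps0 pg1 by simp
  moreover have "(1 - ps) * pg \<le> pg" using ps0 pg0 by (simp add: algebra_simps)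
  ultimately show "pg \<le> 1 - (1 - ps) * (1 - pg)" "(1 - ps) * pg \<le> 1 - (1 - ps) * (1 - pg)" by linarith+
qed

lemma w_lo: "lam + ps * c \<le> 0 \<Longrightarrow> k \<le> N \<Longrightarrow> w c k \<le> 0 \<and> - real k * (real N / pg) \<le> w c k"
proof (induction k)
  case 0 then show ?case by simp
next
  case (Suc k)
  define a where "a = w c k"
  define d where "d = 1 - (1 - ps) * (1 - pg)"
  have dp: "0 < d" using dpos d_def by simp
  have a0: "a \<le> 0" and alo: "- real k * (real N / pg) \<le> a" using Suc by (auto simp: a_def)
  have g: "gg c = real N + lam + ps * c" using Suc.prems by (simp add: gg_def)
  have kN: "real (Suc k) \<le> real N" using Suc.prems by simp
  have NK': "real N / d \<le> real N / pg"
    using d_ge pg0 dp by (intro divide_left_mono) (auto simp: d_def)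
  have Bnum: "real N - real (Suc k) - gg c + lam + ps * c + (1 - ps) * pg * a = - real (Suc k) + (1 - ps) * pg * a"
    by (simp add: g)
  have "(1 - ps) * pg * a \<le> 0" using a0 ps1 pg0 by (intro mult_nonneg_nonpos) auto
  then have B0: "(- real (Suc k) + (1 - ps) * pg * a) / d \<le> 0"
    using dp by (intro divide_nonpos_pos) auto
  have "d * a \<le> (1 - ps) * pg * a"
    using d_ge2 a0 by (simp add: d_def mult_right_mono_neg)
  then have "- real N + d * a \<le> - real (Suc k) + (1 - ps) * pg * a" using kN by linarith
  then have "(- real N + d * a) / d \<le> (- real (Suc k) + (1 - ps) * pg * a) / d"
    using dp by (simp add: divide_right_mono)
  moreover have "(- real N + d * a) / d = - (real N / d) + a" using dp by (simp add: field_simps)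
  ultimately have B1: "- (real N / pg) + a \<le> (- real (Suc k) + (1 - ps) * pg * a) / d"
    using NK' by linarith
  have "- real N + pg * a \<le> real N - real (Suc k) - gg c + pg * a"
    using kN Suc.prems g by linarith
  then have "(- real N + pg * a) / pg \<le> (real N - real (Suc k) - gg c + pg * a) / pg"
    using pg0 by (simp add: divide_right_mono)
  moreover have "(- real N + pg * a) / pg = - (real N / pg) + a" using pg0 by (simp add: field_simps)
  ultimately have A1: "- (real N / pg) + a \<le> (real N - real (Suc k) - gg c + pg * a) / pg" by linarith
  have wS: "w c (Suc k) = min ((real N - real (Suc k) - gg c + pg * a) / pg)
      ((- real (Suc k) + (1 - ps) * pg * a) / d)"
    unfolding w.simps a_def[symmetric] d_def[symmetric] Bnum ..
  have "- real (Suc k) * (real N / pg) = - real k * (real N / pg) - real N / pg"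
    by (simp add: algebra_simps)
  then show ?case using wS A1 B1 B0 alo by (simp add: min_def)
qed


lemma trans_nonneg: "0 \<le> vaoi_trans ps pg N s a s'"
  unfolding vaoi_trans_def using ps0 ps1 pg0 pg1
  by (auto intro!: add_nonneg_nonneg mult_nonneg_nonneg)

lemma trans_lin: "s \<le> N \<Longrightarrow> (\<Sum>s'\<in>{0..N}. vaoi_trans ps pg N s a s' * (K + f s')) =
   K + (\<Sum>s'\<in>{0..N}. vaoi_trans ps pg N s a s' * f s')"
proof -
  assume sN: "s \<le> N"
  have "(\<Sum>s'\<in>{0..N}. vaoi_trans ps pg N s a s' * 1) = 1"
    using trans_sum[OF sN N1, of ps pg a "\<lambda>_. 1"] by (simp add: algebra_simps)
  then have "(\<Sum>s'\<in>{0..N}. vaoi_trans ps pg N s a s' * K) = K"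
    by (simp add: sum_distrib_right[symmetric])
  then show ?thesis by (simp add: distrib_left sum.distrib)
qed
definition GG :: "real \<Rightarrow> real" where
  "GG c = pg * hv c 1 + (1 - pg) * hv c 0 - c"

lemma GG_cont: "continuous_on UNIV GG"
  unfolding GG_def hv_def by (intro continuous_intros w_cont[THEN continuous_on_subset]) auto

lemma exists_c: "\<exists>c. GG c = 0"
proof -
  define K where "K = real N / pg"
  define clo where "clo = - lam / ps - real N * K - 1"
  have K0: "0 \<le> K" using pg0 by (simp add: K_def)
  have lc: "lam + ps * clo \<le> 0"
  proof -
    have "ps * clo = - lam - ps * (real N * K + 1)" using ps0 by (simp add: clo_def field_simps)
    moreover have "0 \<le> ps * (real N * K + 1)" using ps0 K0 by simp
    ultimately show ?thesis by linarith
  qed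
  have b1: "- real (N - 1) * K \<le> hv clo 1" using w_lo[OF lc, of "N - 1"] by (simp add: hv_def K_def)
  have b0: "- real N * K \<le> hv clo 0" using w_lo[OF lc, of "N"] by (simp add: hv_def K_def)
  have "- real (N - 1) * K \<ge> - real N * K" using K0 by (simp add: mult_right_mono)
  then have b1': "- real N * K \<le> hv clo 1" using b1 by linarith
  have "pg * (- real N * K) + (1 - pg) * (- real N * K) \<le> pg * hv clo 1 + (1 - pg) * hv clo 0"
    using b1' b0 pg0 pg1 by (intro add_mono mult_left_mono) auto
  then have "- real N * K \<le> pg * hv clo 1 + (1 - pg) * hv clo 0" by (simp add: algebra_simps)
  moreover have "lam / ps \<ge> 0" using lam0 ps0 by simp
  ultimately have G1: "0 \<le> GG clo" unfolding GG_def clo_def by linarith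
  have l1: "0 \<le> lam + ps * 1" using lam0 ps0 by simp
  have "hv 1 1 \<le> 0" "hv 1 0 \<le> 0" using w_hi[OF l1] by (auto simp: hv_def)
  then have "pg * hv 1 1 + (1 - pg) * hv 1 0 \<le> 0" using pg0 pg1
    by (intro add_nonpos_nonpos mult_nonneg_nonpos) auto
  then have G2: "GG 1 \<le> 0" by (simp add: GG_def)
  have "0 \<le> real N * K" using K0 by simp
  then have "clo \<le> 1" using \<open>lam / ps \<ge> 0\<close> unfolding clo_def by linarith
  then show ?thesis
    using IVT2'[of GG 1 0 clo] G1 G2 GG_cont[THEN continuous_on_subset] by blast
qed

context
  fixes c :: real
  assumes Gc: "GG c = 0"
begin

definition mm :: "nat \<Rightarrow> real" where
  "mm s = (if s < N then pg * hv c (s+1) + (1 - pg) * hv c s else hv c N)"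

definition Q0 :: "nat \<Rightarrow> real" where "Q0 s = real s + mm s"
definition Q1 :: "nat \<Rightarrow> real" where "Q1 s = real s + lam + (1 - ps) * mm s + ps * c"

lemma nu: "pg * hv c 1 + (1 - pg) * hv c 0 = c"
  using Gc by (simp add: GG_def)

lemma Qsum: "s \<le> N \<Longrightarrow> real s + lam * real a + (\<Sum>s'\<in>{0..N}. vaoi_trans ps pg N s a s' * hv c s')
   = (if a = 0 then Q0 s else Q1 s + lam * (real a - 1))"
  using trans_sum[of s N ps pg a "hv c"] N1 nu
  by (auto simp: Q0_def Q1_def mm_def algebra_simps)

lemma acoe: "s \<le> N \<Longrightarrow> hv c s + gg c = min (Q0 s) (Q1 s)"
proof -
  assume sN: "s \<le> N"
  show ?thesis
  proof (cases "s < N")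
    case True
    have "hv c s = (real s - gg c) + min (pg * hv c (s+1) + (1-pg) * hv c s)
        ((lam + ps * c) + (1-ps) * (pg * hv c (s+1) + (1-pg) * hv c s))"
      by (rule fp[OF pg0 pg1 ps0 ps1]) (simp add: hv_Suc[OF True] algebra_simps)
    then show ?thesis using True
      by (simp add: Q0_def Q1_def mm_def min_def algebra_simps)
  next
    case False
    then have "s = N" using sN by simp
    then show ?thesis by (simp add: Q0_def Q1_def mm_def hv_N gg_def min_def algebra_simps)
  qed
qed

lemma Fdiff: "min x (L + (1-ps)*x) - min y (L + (1-ps)*y) \<le> max 0 (x - y)"
proof -
  have "(1-ps)*x \<le> (1-ps)*y" if "x \<le> y" using that ps1 by (simp add: mult_left_mono)
  moreover have "(1-ps)*(x-y) \<le> x - y" if "y \<le> x" using that ps0 ps1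
    by (simp add: mult_left_le_one_le)
  ultimately show ?thesis by (cases "x \<le> y") (auto simp: min_def max_def algebra_simps)
qed

lemma hv_mono_step:
  assumes sN: "s < N" and ih: "hv c (s+1) \<le> mm (s+1)"
  shows "hv c s \<le> hv c (s+1)"
proof (rule ccontr)
  assume "\<not> ?thesis"
  then have dpos: "0 < hv c s - hv c (s+1)" by simp
  have e1: "hv c s + gg c = real s + min (mm s) (lam + ps * c + (1-ps) * mm s)"
    using acoe[of s] sN by (simp add: Q0_def Q1_def min_def algebra_simps)
  have e2: "hv c (s+1) + gg c = real (s+1) + min (mm (s+1)) (lam + ps * c + (1-ps) * mm (s+1))"
    using acoe[of "s+1"] sN by (simp add: Q0_def Q1_def min_def algebra_simps)
  have F: "min (mm s) (lam + ps * c + (1-ps) * mm s) - min (mm (s+1)) (lam + ps * c + (1-ps) * mm (s+1))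
     \<le> max 0 (mm s - mm (s+1))" by (rule Fdiff)
  have ms: "mm s = pg * hv c (s+1) + (1 - pg) * hv c s" using sN by (simp add: mm_def)
  have "pg * (hv c s - hv c (s+1)) > 0" using dpos pg0 by simp
  define X where "X = min (mm s) (lam + ps * c + (1-ps) * mm s)"
  define Y where "Y = min (mm (s+1)) (lam + ps * c + (1-ps) * mm (s+1))"
  have d: "hv c s - hv c (s+1) = X - Y - 1" using e1 e2 unfolding X_def Y_def by simp
  have F': "X - Y \<le> max 0 (mm s - mm (s+1))" using F unfolding X_def Y_def .
  have eq1: "(1 - pg) * (hv c s - hv c (s+1)) = (hv c s - hv c (s+1)) - pg * (hv c s - hv c (s+1))"
    by (simp add: algebra_simps)
  have "mm s - hv c (s+1) = (1 - pg) * (hv c s - hv c (s+1))" using ms by (simp add: algebra_simps)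
  note eqs = this
  show False
  proof (cases "mm s \<le> mm (s+1)")
    case True
    then have "max 0 (mm s - mm (s+1)) = 0" by (simp add: max_def)
    then have "X - Y \<le> 0" using F' by simp
    then show False using d dpos by linarith
  next
    case False
    then have "max 0 (mm s - mm (s+1)) = mm s - mm (s+1)" by (simp add: max_def)
    then have "X - Y \<le> mm s - mm (s+1)" using F' by simp
    then show False using d eqs eq1 ih \<open>pg * (hv c s - hv c (s+1)) > 0\<close> by linarith
  qed
qed

lemma hv_mono_aux: "s < N \<Longrightarrow> hv c s \<le> hv c (s+1)"
proof (induction "N - s" arbitrary: s rule: less_induct)
  case less
  show ?case
  proof (rule hv_mono_step[OF less.prems])
    show "hv c (s+1) \<le> mm (s+1)"
    proof (cases "s + 1 < N")
      case True
      have "hv c (s+1) \<le> hv c (s+1+1)" using less.hyps[of "s+1"] True less.prems by simp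
      then show ?thesis using True pg0 pg1 by (simp add: mm_def algebra_simps)
    next
      case False
      then have "s + 1 = N" using less.prems by simp
      then show ?thesis by (simp add: mm_def)
    qed
  qed
qed

lemma hv_mono: "s \<le> t \<Longrightarrow> t \<le> N \<Longrightarrow> hv c s \<le> hv c t"
proof (induction t rule: dec_induct)
  case base then show ?case by simp
next
  case (step t) then show ?case using hv_mono_aux[of t] by simp
qed

lemma hv_le0: "s \<le> N \<Longrightarrow> hv c s \<le> 0"
  using hv_mono[of s N] hv_N by simp

lemma hv_ge: "s \<le> N \<Longrightarrow> hv c 0 \<le> hv c s"
  using hv_mono[of 0 s] by simp

lemma mm_mono: "s \<le> t \<Longrightarrow> t \<le> N \<Longrightarrow> mm s \<le> mm t"
proof (induction t rule: dec_induct)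
  case base then show ?case by simp
next
  case (step t)
  have "mm t \<le> mm (t+1)"
  proof (cases "t + 1 < N")
    case True
    have "hv c t \<le> hv c (t+1)" "hv c (t+1) \<le> hv c (t+2)" using hv_mono_aux[of t] hv_mono_aux[of "t+1"] True by auto
    then have "pg * hv c (t+1) + (1 - pg) * hv c t \<le> pg * hv c (t+1+1) + (1 - pg) * hv c (t+1)"
      using pg0 pg1 by (intro add_mono mult_left_mono) auto
    then show ?thesis using True by (simp add: mm_def)
  next
    case False
    then have "t + 1 = N" using step by simp
    have "hv c t \<le> hv c N" using hv_mono[of t N] step by simp
    then have "pg * hv c N + (1 - pg) * hv c t \<le> pg * hv c N + (1 - pg) * hv c N"
      using pg0 pg1 by (intro add_mono mult_left_mono) auto
    then show ?thesis using \<open>t + 1 = N\<close> by (simp add: mm_def algebra_simps)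
  qed
  then show ?case using step by simp
qed

definition DD :: nat where "DD = (LEAST k. N < k \<or> Q1 k \<le> Q0 k)"

lemma DD_iff: "s \<le> N \<Longrightarrow> (DD \<le> s \<longleftrightarrow> Q1 s \<le> Q0 s)"
proof
  assume sN: "s \<le> N" and "DD \<le> s"
  have "N < DD \<or> Q1 DD \<le> Q0 DD" unfolding DD_def by (rule LeastI[of _ "N+1"]) simp
  then have "Q1 DD \<le> Q0 DD" using sN \<open>DD \<le> s\<close> by auto
  moreover have "mm DD \<le> mm s" using mm_mono \<open>DD \<le> s\<close> sN by simp
  moreover have "ps * mm DD \<le> ps * mm s" using calculation(2) ps0 by simp
  ultimately show "Q1 s \<le> Q0 s" by (simp add: Q0_def Q1_def algebra_simps)
next
  assume "s \<le> N" "Q1 s \<le> Q0 s"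
  then show "DD \<le> s" unfolding DD_def by (intro Least_le) simp
qed

lemma lower: "valid_policy \<pi> \<Longrightarrow> s \<le> N \<Longrightarrow>
   real T * gg c + hv c s \<le> exp_cost ps pg N lam \<pi> hist s T"
proof (induction T arbitrary: hist s)
  case 0 then show ?case using hv_le0 by simp
next
  case (Suc T)
  have step: "real (Suc T) * gg c + hv c s \<le> real s + lam * real a +
      (\<Sum>s'\<in>{0..N}. vaoi_trans ps pg N s a s' * exp_cost ps pg N lam \<pi> (hist @ [(s, a)]) s' T)"
    if a: "a = 0 \<or> a = 1" for a
  proof -
    have "(\<Sum>s'\<in>{0..N}. vaoi_trans ps pg N s a s' * (real T * gg c + hv c s')) \<le>
        (\<Sum>s'\<in>{0..N}. vaoi_trans ps pg N s a s' * exp_cost ps pg N lam \<pi> (hist @ [(s, a)]) s' T)"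
      using Suc by (intro sum_mono mult_left_mono trans_nonneg) auto
    moreover have "(\<Sum>s'\<in>{0..N}. vaoi_trans ps pg N s a s' * (real T * gg c + hv c s')) =
        real T * gg c + (\<Sum>s'\<in>{0..N}. vaoi_trans ps pg N s a s' * hv c s')"
      using trans_lin[OF Suc.prems(2)] .
    moreover have "hv c s + gg c \<le> real s + lam * real a + (\<Sum>s'\<in>{0..N}. vaoi_trans ps pg N s a s' * hv c s')"
      using Qsum[OF Suc.prems(2), of a] acoe[OF Suc.prems(2)] a by auto
    ultimately show ?thesis by (simp add: algebra_simps)
  qed
  have p: "0 \<le> \<pi> hist s" "\<pi> hist s \<le> 1" using Suc.prems(1) by (auto simp: valid_policy_def)
  define V where "V = real (Suc T) * gg c + hv c s"
  define X0 where "X0 = real s + lam * real (0::nat) +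
      (\<Sum>s'\<in>{0..N}. vaoi_trans ps pg N s 0 s' * exp_cost ps pg N lam \<pi> (hist @ [(s, 0)]) s' T)"
  define X1 where "X1 = real s + lam * real (1::nat) +
      (\<Sum>s'\<in>{0..N}. vaoi_trans ps pg N s 1 s' * exp_cost ps pg N lam \<pi> (hist @ [(s, 1)]) s' T)"
  have "V \<le> X0" "V \<le> X1" using step[of 0] step[of 1] by (auto simp: V_def X0_def X1_def)
  then have "(1 - \<pi> hist s) * V + \<pi> hist s * V \<le> (1 - \<pi> hist s) * X0 + \<pi> hist s * X1"
    using p by (intro add_mono mult_left_mono) auto
  moreover have "exp_cost ps pg N lam \<pi> hist s (Suc T) = (1 - \<pi> hist s) * X0 + \<pi> hist s * X1"
    by (simp add: act_prob_def X0_def X1_def)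
  ultimately show ?case by (simp add: V_def algebra_simps)
qed

lemma upper: "s \<le> N \<Longrightarrow>
   exp_cost ps pg N lam (threshold_policy DD) hist s T \<le> real T * gg c + hv c s - hv c 0"
proof (induction T arbitrary: hist s)
  case 0 then show ?case using hv_ge by simp
next
  case (Suc T)
  define a where "a = (if DD \<le> s then 1 else 0 :: nat)"
  have "(\<Sum>s'\<in>{0..N}. vaoi_trans ps pg N s a s' * exp_cost ps pg N lam (threshold_policy DD) (hist @ [(s, a)]) s' T)
      \<le> (\<Sum>s'\<in>{0..N}. vaoi_trans ps pg N s a s' * (real T * gg c - hv c 0 + hv c s'))"
    using Suc by (intro sum_mono mult_left_mono trans_nonneg) (auto simp: algebra_simps)
  moreover have "(\<Sum>s'\<in>{0..N}. vaoi_trans ps pg N s a s' * (real T * gg c - hv c 0 + hv c s')) =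
        real T * gg c - hv c 0 + (\<Sum>s'\<in>{0..N}. vaoi_trans ps pg N s a s' * hv c s')"
    using trans_lin[OF Suc.prems] .
  moreover have "real s + lam * real a + (\<Sum>s'\<in>{0..N}. vaoi_trans ps pg N s a s' * hv c s') = hv c s + gg c"
    using Qsum[OF Suc.prems, of a] acoe[OF Suc.prems] DD_iff[OF Suc.prems] by (auto simp: a_def min_def)
  moreover have "exp_cost ps pg N lam (threshold_policy DD) hist s (Suc T) = real s + lam * real a +
      (\<Sum>s'\<in>{0..N}. vaoi_trans ps pg N s a s' * exp_cost ps pg N lam (threshold_policy DD) (hist @ [(s, a)]) s' T)"
    by (simp add: act_prob_def threshold_policy_def a_def)
  ultimately show ?case by (simp add: algebra_simps)
qed

lemma lim_aux: "limsup (\<lambda>T. ereal (x + K / real T)) = ereal x"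
proof (rule lim_imp_Limsup)
  show "\<not> trivial_limit sequentially" by simp
  have "(\<lambda>T. x + K / real T) \<longlonglongrightarrow> x + 0"
    by (intro tendsto_intros lim_const_over_n)
  then show "(\<lambda>T. ereal (x + K / real T)) \<longlonglongrightarrow> ereal x" by simp
qed

lemma main_c: "\<forall>\<pi>. valid_policy \<pi> \<longrightarrow>
           (\<forall>s\<le>N. avg_cost ps pg N lam (threshold_policy DD) s \<le> avg_cost ps pg N lam \<pi> s)"
proof (intro allI impI)
  fix \<pi> s assume vp: "valid_policy \<pi>" and sN: "s \<le> N"
  have "avg_cost ps pg N lam (threshold_policy DD) s \<le> limsup (\<lambda>T. ereal (gg c + (hv c s - hv c 0) / real T))"
    unfolding avg_cost_def
  proof (intro Limsup_mono eventually_sequentiallyI[of 1])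
    fix T :: nat assume "1 \<le> T"
    then have Tp: "0 < real T" by simp
    have "exp_cost ps pg N lam (threshold_policy DD) [] s T / real T \<le> (real T * gg c + hv c s - hv c 0) / real T"
      using upper[OF sN] Tp by (intro divide_right_mono) auto
    also have "\<dots> = gg c + (hv c s - hv c 0) / real T" using Tp by (simp add: field_simps)
    finally show "ereal (exp_cost ps pg N lam (threshold_policy DD) [] s T / real T) \<le> ereal (gg c + (hv c s - hv c 0) / real T)"
      by simp
  qed
  also have "\<dots> = ereal (gg c)" by (rule lim_aux)
  also have "\<dots> = limsup (\<lambda>T. ereal (gg c + hv c s / real T))" by (rule lim_aux[symmetric])
  also have "\<dots> \<le> avg_cost ps pg N lam \<pi> s"
    unfolding avg_cost_def
  proof (intro Limsup_mono eventually_sequentiallyI[of 1])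
    fix T :: nat assume "1 \<le> T"
    then have Tp: "0 < real T" by simp
    have "gg c + hv c s / real T = (real T * gg c + hv c s) / real T" using Tp by (simp add: field_simps)
    also have "\<dots> \<le> exp_cost ps pg N lam \<pi> [] s T / real T"
      using lower[OF vp sN] Tp by (intro divide_right_mono) auto
    finally show "ereal (gg c + hv c s / real T) \<le> ereal (exp_cost ps pg N lam \<pi> [] s T / real T)"
      by simp
  qed
  finally show "avg_cost ps pg N lam (threshold_policy DD) s \<le> avg_cost ps pg N lam \<pi> s" .
qed

end

lemma main: "\<exists>DT::nat. \<forall>\<pi>. valid_policy \<pi> \<longrightarrow>
           (\<forall>s\<le>N. avg_cost ps pg N lam (threshold_policy DT) s \<le> avg_cost ps pg N lam \<pi> s)"
  using exists_c main_c by blast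

end

theorem proposition5:
  fixes ps pg lam :: real and Dmax :: nat
  assumes "0 < ps" "ps < 1" "0 < pg" "pg < 1" "0 \<le> lam" "1 \<le> Dmax"
  shows "\<exists>DT::nat. \<forall>\<pi>. valid_policy \<pi> \<longrightarrow>
           (\<forall>s\<le>Dmax. avg_cost ps pg Dmax lam (threshold_policy DT) s
                        \<le> avg_cost ps pg Dmax lam \<pi> s)"
  by (rule main[OF assms])

end
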